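(* For every $(\mu,\sigma)\in\Theta$, $$\sup_{x\in\mathbb{R}}|F_{(\mu,\sigma)}(x)-F_{(0,1)}(x)|=\max\{U(\mu,\sigma),V(\mu,\sigma)\},$$ where $$U(\mu,\sigma)=1-\exp\Big\{-\max\Big\{\mu,-\frac{\mu}{\sigma}\Big\}\Big\},$$ $V(\mu,1)=0$, and for $\sigma\ne1$ $$V(\mu,\sigma)=|1-\sigma|\exp\Big\{\frac{\mu-\sigma\ln\sigma}{\sigma-1}\Big\}\,\mathbb{1}_{\{\mu/\ln(\sigma)<\min\{\sigma,1\}\}}.$$
   Context: For $\vartheta=(\mu,\sigma)\in\Theta=\mathbb{R}\times(0,\infty)$, $F_\vartheta(x)=1-\exp\{-(x-\mu)/\sigma\}$ for $x>\mu$ and $F_\vartheta(x)=0$ for $x\le\mu$ (two-parameter exponential cdf). *)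

theory Defs
  imports "HOL-Analysis.Analysis"
begin

definition expF :: "real \<Rightarrow> real \<Rightarrow> real \<Rightarrow> real" where
  "expF \<mu> \<sigma> x = (if x > \<mu> then 1 - exp (-(x - \<mu>) / \<sigma>) else 0)"

definition U :: "real \<Rightarrow> real \<Rightarrow> real" where
  "U \<mu> \<sigma> = 1 - exp (- max \<mu> (- \<mu> / \<sigma>))"

definition V :: "real \<Rightarrow> real \<Rightarrow> real" where
  "V \<mu> \<sigma> = (if \<sigma> = 1 then 0
     else \<bar>1 - \<sigma>\<bar> * exp ((\<mu> - \<sigma> * ln \<sigma>) / (\<sigma> - 1)) *
          (if \<mu> / ln \<sigma> < min \<sigma> 1 then 1 else 0))"

end

theory Submission
  imports Defs
begin

lemma mono_bound:
  fixes g g' :: "real \<Rightarrow> real" and a c x :: real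
  assumes d: "\<And>x. (g has_real_derivative g' x) (at x)"
  and inc: "\<And>x. x \<le> c \<Longrightarrow> g' x \<ge> 0" and dec: "\<And>x. x \<ge> c \<Longrightarrow> g' x \<le> 0"
  and ev: "\<And>x. \<exists>y\<ge>x. g y \<ge> 0"
  and ax: "a \<le> x"
  shows "\<bar>g x\<bar> \<le> max \<bar>g a\<bar> (if a < c then \<bar>g c\<bar> else 0)"
proof -
  have up: "g u \<le> g v" if "u \<le> v" "v \<le> c" for u v
    using DERIV_nonneg_imp_nondecreasing[of u v g] that d inc by force
  have down: "g v \<le> g u" if "u \<le> v" "c \<le> u" for u v
    using DERIV_nonpos_imp_nonincreasing[of u v g] that d dec by force
  show ?thesis
  proof (cases "x \<ge> c")
    case True
    obtain y where y: "y \<ge> x" "g y \<ge> 0" using ev by blast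
    have "g y \<le> g x" using down[OF y(1)] True by simp
    hence g0: "g x \<ge> 0" using y by simp
    show ?thesis
    proof (cases "a < c")
      case True
      then show ?thesis using down[of c x] \<open>x \<ge> c\<close> g0 by auto
    next
      case False
      then show ?thesis using down[of a x] ax g0 by auto
    qed
  next
    case False
    then show ?thesis using up[of a x] up[of x c] ax by auto
  qed
qed


lemma xs_exps:
  fixes \<mu> \<sigma> :: real
  assumes "\<sigma> > 0" "\<sigma> \<noteq> 1"
  defines "xs \<equiv> (\<sigma> * ln \<sigma> - \<mu>) / (\<sigma> - 1)"
  shows "exp (- xs) = exp ((\<mu> - \<sigma> * ln \<sigma>) / (\<sigma> - 1))"
    and "exp (-(xs - \<mu>) / \<sigma>) = \<sigma> * exp (- xs)"
proof -
  have s1: "\<sigma> - 1 \<noteq> 0" using assms by simp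
  show "exp (- xs) = exp ((\<mu> - \<sigma> * ln \<sigma>) / (\<sigma> - 1))"
    unfolding xs_def using s1 by (simp add: field_simps)
  have "-(xs - \<mu>) / \<sigma> = ln \<sigma> + (- xs)"
    unfolding xs_def using s1 assms(1) by (simp add: field_simps)
  then have "exp (-(xs - \<mu>) / \<sigma>) = exp (ln \<sigma> + (- xs))" by (rule arg_cong[where f=exp])
  also have "\<dots> = exp (ln \<sigma>) * exp (- xs)" by (rule exp_add)
  finally show "exp (-(xs - \<mu>) / \<sigma>) = \<sigma> * exp (- xs)"
    using assms(1) by simp
qed

lemma xs_cond:
  fixes \<mu> \<sigma> :: real
  assumes "\<sigma> > 0" "\<sigma> \<noteq> 1"
  shows "(max \<mu> 0 < (\<sigma> * ln \<sigma> - \<mu>) / (\<sigma> - 1)) \<longleftrightarrow> \<mu> / ln \<sigma> < min \<sigma> 1"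
proof (cases "\<sigma> < 1")
  case True
  have L: "ln \<sigma> < 0" using True assms by simp
  have d: "\<sigma> - 1 < 0" using True by simp
  have LL: "ln \<sigma> < \<sigma> * ln \<sigma>"
  proof -
    have "0 < (\<sigma> - 1) * ln \<sigma>" using d L by (simp add: mult_neg_neg)
    then show ?thesis by (simp add: algebra_simps)
  qed
  have m: "\<sigma> * ln \<sigma> < \<mu> * \<sigma> \<longleftrightarrow> ln \<sigma> < \<mu>" using assms(1) by (metis mult.commute mult_less_cancel_left_pos)
  have a1: "\<mu> < (\<sigma> * ln \<sigma> - \<mu>) / (\<sigma> - 1) \<longleftrightarrow> \<sigma> * ln \<sigma> - \<mu> < \<mu> * (\<sigma> - 1)"
    using d by (simp add: neg_less_divide_eq)
  have a2: "0 < (\<sigma> * ln \<sigma> - \<mu>) / (\<sigma> - 1) \<longleftrightarrow> \<sigma> * ln \<sigma> - \<mu> < 0"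
    using d by (simp add: neg_less_divide_eq)
  have a1': "\<sigma> * ln \<sigma> - \<mu> < \<mu> * (\<sigma> - 1) \<longleftrightarrow> \<sigma> * ln \<sigma> < \<mu> * \<sigma>"
    by (simp add: algebra_simps)
  have lhs: "(max \<mu> 0 < (\<sigma> * ln \<sigma> - \<mu>) / (\<sigma> - 1)) \<longleftrightarrow> \<sigma> * ln \<sigma> < \<mu>"
    unfolding max_less_iff_conj a1 a2 a1' m using LL by linarith
  have r: "\<mu> / ln \<sigma> < \<sigma> \<longleftrightarrow> \<sigma> * ln \<sigma> < \<mu>" using L
    by (simp add: neg_divide_less_eq mult.commute)
  show ?thesis unfolding lhs using r True by simp
next
  case False
  then have T: "\<sigma> > 1" using assms by simp
  have L: "ln \<sigma> > 0" using T by simp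
  have d: "\<sigma> - 1 > 0" using T by simp
  have LL: "ln \<sigma> < \<sigma> * ln \<sigma>"
  proof -
    have "0 < (\<sigma> - 1) * ln \<sigma>" using d L by simp
    then show ?thesis by (simp add: algebra_simps)
  qed
  have m: "\<mu> * \<sigma> < \<sigma> * ln \<sigma> \<longleftrightarrow> \<mu> < ln \<sigma>" using assms(1) by (metis mult.commute mult_less_cancel_left_pos)
  have a1: "\<mu> < (\<sigma> * ln \<sigma> - \<mu>) / (\<sigma> - 1) \<longleftrightarrow> \<mu> * (\<sigma> - 1) < \<sigma> * ln \<sigma> - \<mu>"
    using d by (simp add: pos_less_divide_eq)
  have a2: "0 < (\<sigma> * ln \<sigma> - \<mu>) / (\<sigma> - 1) \<longleftrightarrow> 0 < \<sigma> * ln \<sigma> - \<mu>"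
    using d by (simp add: pos_less_divide_eq)
  have a1': "\<mu> * (\<sigma> - 1) < \<sigma> * ln \<sigma> - \<mu> \<longleftrightarrow> \<mu> * \<sigma> < \<sigma> * ln \<sigma>"
    by (simp add: algebra_simps)
  have lhs: "(max \<mu> 0 < (\<sigma> * ln \<sigma> - \<mu>) / (\<sigma> - 1)) \<longleftrightarrow> \<mu> < ln \<sigma>"
    unfolding max_less_iff_conj a1 a2 a1' m using LL by linarith
  have r: "\<mu> / ln \<sigma> < 1 \<longleftrightarrow> \<mu> < ln \<sigma>" using L
    by (simp add: divide_less_eq)
  show ?thesis unfolding lhs using r T by simp
qed


lemma Dle:
  fixes \<mu> \<sigma> x :: real
  assumes s: "\<sigma> > 0" and x: "x \<le> max \<mu> 0"
  shows "\<bar>expF \<mu> \<sigma> x - expF 0 1 x\<bar> \<le> U \<mu> \<sigma>"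
proof (cases "\<mu> > 0")
  case True
  have mx: "max \<mu> (- \<mu> / \<sigma>) = \<mu>"
  proof -
    have "- \<mu> / \<sigma> < 0" using True s by (simp add: divide_pos_pos)
    then show ?thesis using True by simp
  qed
  have xm: "x \<le> \<mu>" using x True by simp
  show ?thesis
  proof (cases "x > 0")
    case True
    have "exp (- \<mu>) \<le> exp (- x)" using xm by simp
    then show ?thesis using True xm unfolding expF_def U_def mx by simp
  next
    case False
    have "exp (- \<mu>) \<le> 1" using True by simp
    then show ?thesis using False xm unfolding expF_def U_def mx by simp
  qed
next
  case False
  have mx: "max \<mu> (- \<mu> / \<sigma>) = - \<mu> / \<sigma>"
  proof -
    have "- \<mu> / \<sigma> \<ge> 0" using False s divide_nonpos_pos[of \<mu> \<sigma>] by simp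
    then show ?thesis using False by simp
  qed
  have x0: "x \<le> 0" using x False by simp
  show ?thesis
  proof (cases "x > \<mu>")
    case True
    have "\<mu> / \<sigma> \<le> - (x - \<mu>) / \<sigma>" using x0 s by (simp add: divide_right_mono)
    then have "exp (\<mu> / \<sigma>) \<le> exp (- (x - \<mu>) / \<sigma>)" by simp
    moreover have "exp (- (x - \<mu>) / \<sigma>) \<le> 1" using True s divide_nonpos_pos[of "\<mu> - x" \<sigma>] by simp
    ultimately show ?thesis using True x0 unfolding expF_def U_def mx by simp
  next
    case F2: False
    have "exp (\<mu> / \<sigma>) \<le> 1"
    proof -
      have "\<mu> / \<sigma> \<le> 0" using False s divide_nonpos_pos[of \<mu> \<sigma>] by linarith
      then show ?thesis by simp
    qed
    then show ?thesis using F2 x0 unfolding expF_def U_def mx by simp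
  qed
qed

lemma hU:
  fixes \<mu> \<sigma> :: real
  assumes s: "\<sigma> > 0"
  shows "\<bar>exp (- max \<mu> 0) - exp (- (max \<mu> 0 - \<mu>) / \<sigma>)\<bar> = U \<mu> \<sigma>"
    and "expF \<mu> \<sigma> (max \<mu> 0) - expF 0 1 (max \<mu> 0) = exp (- max \<mu> 0) - exp (- (max \<mu> 0 - \<mu>) / \<sigma>)"
proof -
  show "\<bar>exp (- max \<mu> 0) - exp (- (max \<mu> 0 - \<mu>) / \<sigma>)\<bar> = U \<mu> \<sigma>"
  proof (cases "\<mu> > 0")
    case True
    have mx: "max \<mu> (- \<mu> / \<sigma>) = \<mu>"
    proof -
      have "- \<mu> / \<sigma> < 0" using True s by (simp add: divide_pos_pos)
      then show ?thesis using True by simp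
    qed
    have "exp (- \<mu>) \<le> 1" using True by simp
    then show ?thesis using True unfolding U_def mx by simp
  next
    case False
    have mx: "max \<mu> (- \<mu> / \<sigma>) = - \<mu> / \<sigma>"
    proof -
      have "- \<mu> / \<sigma> \<ge> 0" using False s divide_nonpos_pos[of \<mu> \<sigma>] by simp
      then show ?thesis using False by simp
    qed
    have "exp (\<mu> / \<sigma>) \<le> 1"
    proof -
      have "\<mu> / \<sigma> \<le> 0" using False s divide_nonpos_pos[of \<mu> \<sigma>] by linarith
      then show ?thesis by simp
    qed
    then show ?thesis using False unfolding U_def mx by simp
  qed
  show "expF \<mu> \<sigma> (max \<mu> 0) - expF 0 1 (max \<mu> 0) = exp (- max \<mu> 0) - exp (- (max \<mu> 0 - \<mu>) / \<sigma>)"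
    unfolding expF_def by (cases "\<mu> > 0"; cases "\<mu> = 0"; simp)
qed

lemma hD:
  fixes \<mu> \<sigma> x :: real
  assumes "x > max \<mu> 0"
  shows "expF \<mu> \<sigma> x - expF 0 1 x = exp (- x) - exp (- (x - \<mu>) / \<sigma>)"
  using assms unfolding expF_def by simp


lemma hderiv:
  fixes \<mu> \<sigma> x :: real
  assumes s: "\<sigma> > 0"
  shows "((\<lambda>x. exp (- x) - exp (- (x - \<mu>) / \<sigma>)) has_real_derivative
          (- exp (- x) + exp (- (x - \<mu>) / \<sigma>) / \<sigma>)) (at x)"
  using s by (auto intro!: derivative_eq_intros simp: field_simps)

lemma hsign:
  fixes \<mu> \<sigma> x :: real
  assumes s: "\<sigma> > 0" "\<sigma> \<noteq> 1"
  defines "xs \<equiv> (\<sigma> * ln \<sigma> - \<mu>) / (\<sigma> - 1)"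
  shows "0 \<le> - exp (- x) + exp (- (x - \<mu>) / \<sigma>) / \<sigma> \<longleftrightarrow> 0 \<le> (\<sigma> - 1) * (x - xs)"
    and "- exp (- x) + exp (- (x - \<mu>) / \<sigma>) / \<sigma> \<le> 0 \<longleftrightarrow> (\<sigma> - 1) * (x - xs) \<le> 0"
proof -
  define k where "k = (\<sigma> - 1) * (x - xs) / \<sigma>"
  have s1: "\<sigma> - 1 \<noteq> 0" using s by simp
  have ke: "- x + k = - (x - \<mu>) / \<sigma> - ln \<sigma>"
    unfolding k_def xs_def using s1 s(1) by (simp add: field_simps)
  have "exp (- (x - \<mu>) / \<sigma>) / \<sigma> = exp (- (x - \<mu>) / \<sigma> - ln \<sigma>)"
    using s(1) by (simp add: exp_diff)
  also have "\<dots> = exp (- x) * exp k" unfolding ke[symmetric] by (rule exp_add)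
  finally have e: "- exp (- x) + exp (- (x - \<mu>) / \<sigma>) / \<sigma> = exp (- x) * (exp k - 1)"
    by (simp add: algebra_simps)
  have k1: "0 \<le> k \<longleftrightarrow> 0 \<le> (\<sigma> - 1) * (x - xs)" unfolding k_def using s(1)
    by (simp add: zero_le_divide_iff)
  have k2: "k \<le> 0 \<longleftrightarrow> (\<sigma> - 1) * (x - xs) \<le> 0" unfolding k_def using s(1)
    by (simp add: divide_le_0_iff)
  have p: "exp (- x) > 0" by simp
  show "0 \<le> - exp (- x) + exp (- (x - \<mu>) / \<sigma>) / \<sigma> \<longleftrightarrow> 0 \<le> (\<sigma> - 1) * (x - xs)"
    unfolding e k1[symmetric] using p by (simp add: zero_le_mult_iff)
  show "- exp (- x) + exp (- (x - \<mu>) / \<sigma>) / \<sigma> \<le> 0 \<longleftrightarrow> (\<sigma> - 1) * (x - xs) \<le> 0"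
    unfolding e k2[symmetric] using p by (simp add: mult_le_0_iff)
qed


lemma hV:
  fixes \<mu> \<sigma> :: real
  assumes s: "\<sigma> > 0" "\<sigma> \<noteq> 1"
  defines "xs \<equiv> (\<sigma> * ln \<sigma> - \<mu>) / (\<sigma> - 1)"
  shows "(if max \<mu> 0 < xs then \<bar>exp (- xs) - exp (- (xs - \<mu>) / \<sigma>)\<bar> else 0) = V \<mu> \<sigma>"
proof -
  have e1: "exp (- xs) = exp ((\<mu> - \<sigma> * ln \<sigma>) / (\<sigma> - 1))" using xs_exps(1)[OF s] unfolding xs_def .
  have e2: "exp (- (xs - \<mu>) / \<sigma>) = \<sigma> * exp (- xs)" using xs_exps(2)[OF s] unfolding xs_def .
  have "\<bar>exp (- xs) - exp (- (xs - \<mu>) / \<sigma>)\<bar> = \<bar>1 - \<sigma>\<bar> * exp ((\<mu> - \<sigma> * ln \<sigma>) / (\<sigma> - 1))"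
  proof -
    have "exp (- xs) - \<sigma> * exp (- xs) = (1 - \<sigma>) * exp (- xs)" by (simp add: algebra_simps)
    then show ?thesis unfolding e2 e1[symmetric] by (simp add: abs_mult)
  qed
  then show ?thesis unfolding V_def xs_def using xs_cond[OF s] s(2) by simp
qed

lemma hbound:
  fixes \<mu> \<sigma> x :: real
  assumes s: "\<sigma> > 0" and ax: "max \<mu> 0 \<le> x"
  shows "\<bar>exp (- x) - exp (- (x - \<mu>) / \<sigma>)\<bar> \<le> max (U \<mu> \<sigma>) (V \<mu> \<sigma>)"
proof -
  define h where "h x = exp (- x) - exp (- (x - \<mu>) / \<sigma>)" for x
  define h' where "h' x = - exp (- x) + exp (- (x - \<mu>) / \<sigma>) / \<sigma>" for x
  define a where "a = max \<mu> 0"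
  define xs where "xs = (\<sigma> * ln \<sigma> - \<mu>) / (\<sigma> - 1)"
  have ha: "\<bar>h a\<bar> = U \<mu> \<sigma>" unfolding h_def a_def using hU(1)[OF s] .
  show ?thesis
  proof (cases "\<sigma> = 1")
    case True
    have hx: "h y = exp (- y) * (1 - exp \<mu>)" for y
      unfolding h_def True by (simp add: algebra_simps exp_add[symmetric])
    have "\<bar>h x\<bar> = exp (- x) * \<bar>1 - exp \<mu>\<bar>" unfolding hx by (simp add: abs_mult)
    also have "\<dots> \<le> exp (- a) * \<bar>1 - exp \<mu>\<bar>" using ax unfolding a_def
      by (intro mult_right_mono) auto
    also have "\<dots> = \<bar>h a\<bar>" unfolding hx by (simp add: abs_mult)
    finally have "\<bar>h x\<bar> \<le> U \<mu> \<sigma>" using ha by simp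
    then have "\<bar>h x\<bar> \<le> max (U \<mu> \<sigma>) (V \<mu> \<sigma>)" by (rule max.coboundedI1)
    then show ?thesis unfolding h_def .
  next
    case False
    have s2: "\<sigma> \<noteq> 1" using False .
    have hd: "(h has_real_derivative h' y) (at y)" for y
      unfolding h_def h'_def using hderiv[OF s] .
    have Vid: "(if a < xs then \<bar>h xs\<bar> else 0) = V \<mu> \<sigma>"
      unfolding a_def xs_def h_def using hV[OF s s2] by simp
    show ?thesis
    proof (cases "\<sigma> < 1")
      case True
      have "\<bar>h x\<bar> \<le> max \<bar>h a\<bar> (if a < xs then \<bar>h xs\<bar> else 0)"
      proof (rule mono_bound[where g'=h'])
        show "(h has_real_derivative h' y) (at y)" for y by (rule hd)
        show "0 \<le> h' y" if "y \<le> xs" for y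
          unfolding h'_def hsign(1)[OF s s2] xs_def[symmetric] using that True
          by (simp add: mult_nonpos_nonpos)
        show "h' y \<le> 0" if "xs \<le> y" for y
          unfolding h'_def hsign(2)[OF s s2] xs_def[symmetric] using that True
          by (simp add: mult_nonpos_nonneg)
        show "\<exists>y\<ge>z. 0 \<le> h y" for z
        proof (intro exI conjI)
          define y where "y = max z (\<mu> / (1 - \<sigma>))"
          show "z \<le> y" unfolding y_def by simp
          have "\<mu> / (1 - \<sigma>) \<le> y" unfolding y_def by simp
          then have "\<mu> \<le> y * (1 - \<sigma>)" using True by (simp add: pos_divide_le_eq)
          have "- (y - \<mu>) \<le> - y * \<sigma>" using \<open>\<mu> \<le> y * (1 - \<sigma>)\<close> by (simp add: algebra_simps)
          then have "- (y - \<mu>) / \<sigma> \<le> - y" using s by (simp add: divide_le_eq)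
          then show "0 \<le> h y" unfolding h_def by simp
        qed
        show "a \<le> x" using ax unfolding a_def .
      qed
      then show ?thesis unfolding Vid ha unfolding h_def .
    next
      case F2: False
      then have T: "\<sigma> > 1" using s2 by simp
      have "\<bar>(\<lambda>y. - h y) x\<bar> \<le> max \<bar>(\<lambda>y. - h y) a\<bar> (if a < xs then \<bar>(\<lambda>y. - h y) xs\<bar> else 0)"
      proof (rule mono_bound[where g'="\<lambda>y. - h' y"])
        show "((\<lambda>y. - h y) has_real_derivative - h' y) (at y)" for y by (intro DERIV_minus hd)
        show "0 \<le> - h' y" if "y \<le> xs" for y
          using hsign(2)[OF s s2, where x=y and \<mu>=\<mu>] that T unfolding h'_def xs_def[symmetric]
          by (simp add: mult_nonneg_nonpos)
        show "- h' y \<le> 0" if "xs \<le> y" for y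
          using hsign(1)[OF s s2, where x=y and \<mu>=\<mu>] that T unfolding h'_def xs_def[symmetric]
          by simp
        show "\<exists>y\<ge>z. 0 \<le> - h y" for z
        proof (intro exI conjI)
          define y where "y = max z (- \<mu> / (\<sigma> - 1))"
          show "z \<le> y" unfolding y_def by simp
          have "- \<mu> / (\<sigma> - 1) \<le> y" unfolding y_def by simp
          moreover have "\<sigma> - 1 > 0" using T by simp
          ultimately have "- \<mu> \<le> y * (\<sigma> - 1)" by (metis pos_divide_le_eq)
          then have "- y * \<sigma> \<le> - (y - \<mu>)" by (simp add: algebra_simps)
          then have "- y \<le> - (y - \<mu>) / \<sigma>" using s by (simp add: le_divide_eq)
          then show "0 \<le> - h y" unfolding h_def by simp
        qed
        show "a \<le> x" using ax unfolding a_def .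
      qed
      then have "\<bar>h x\<bar> \<le> max \<bar>h a\<bar> (if a < xs then \<bar>h xs\<bar> else 0)"
        by (simp only: abs_minus_cancel)
      then show ?thesis unfolding Vid ha unfolding h_def .
    qed
  qed
qed

theorem mainTheorem5:
  fixes \<mu> \<sigma> :: real
  assumes "\<sigma> > 0"
  shows "(SUP x::real. \<bar>expF \<mu> \<sigma> x - expF 0 1 x\<bar>) = max (U \<mu> \<sigma>) (V \<mu> \<sigma>)"
proof -
  define D where "D x = \<bar>expF \<mu> \<sigma> x - expF 0 1 x\<bar>" for x
  define a where "a = max \<mu> 0"
  define xs where "xs = (\<sigma> * ln \<sigma> - \<mu>) / (\<sigma> - 1)"
  have le: "D x \<le> max (U \<mu> \<sigma>) (V \<mu> \<sigma>)" for x
  proof (cases "x \<le> a")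
    case True
    then show ?thesis using max.coboundedI1[OF Dle[OF assms True[unfolded a_def]]] unfolding D_def by blast
  next
    case False
    have x1: "max \<mu> 0 < x" using False unfolding a_def by linarith
    have e: "expF \<mu> \<sigma> x - expF 0 1 x = exp (- x) - exp (- (x - \<mu>) / \<sigma>)" using hD[OF x1] .
    show ?thesis using hbound[OF assms less_imp_le[OF x1]] unfolding D_def e .
  qed
  have Da: "D a = U \<mu> \<sigma>" unfolding D_def a_def using hU[OF assms] by simp
  have att: "max (U \<mu> \<sigma>) (V \<mu> \<sigma>) \<in> range D"
  proof (cases "V \<mu> \<sigma> \<le> U \<mu> \<sigma>")
    case True
    then show ?thesis using Da by (metis max.absorb1 rangeI)
  next
    case False
    have U0: "U \<mu> \<sigma> \<ge> 0" using Da unfolding D_def by simp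
    then have V0: "V \<mu> \<sigma> \<noteq> 0" using False by simp
    then have s2: "\<sigma> \<noteq> 1" unfolding V_def by auto
    have "(if a < xs then \<bar>exp (- xs) - exp (- (xs - \<mu>) / \<sigma>)\<bar> else 0) = V \<mu> \<sigma>"
      using hV[OF assms s2] unfolding a_def xs_def .
    then have ax: "a < xs" and Vx: "\<bar>exp (- xs) - exp (- (xs - \<mu>) / \<sigma>)\<bar> = V \<mu> \<sigma>"
      using V0 by (auto split: if_splits)
    have "D xs = V \<mu> \<sigma>" unfolding D_def using hD[of \<mu> xs \<sigma>] ax Vx unfolding a_def by simp
    then show ?thesis using False by (metis max.absorb2 nle_le rangeI)
  qed
  have "Sup (range D) = max (U \<mu> \<sigma>) (V \<mu> \<sigma>)"
    by (rule cSup_eq_maximum[OF att]) (auto intro: le)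
  then show ?thesis unfolding D_def .
qed

end
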